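(* Let $T$ be a reachable $\mathcal C_w$-maximal rigid module. For any $R,S\in\mathrm{add}(T)$ we have $Y_RY_S=q^{[R,S]}Y_{R\oplus S}$.
   Context: Setting: $\Lambda$ is the preprojective algebra of a finite connected quiver without oriented cycles with vertex set $I$, $w$ an element of the corresponding Weyl group with reduced expression $s_{i_r}\cdots s_{i_1}$, $\mathcal C_w$ the full subcategory of finite-dimensional $\Lambda$-modules that are quotients of finite direct sums of copies of $V_{\mathbf i}=\bigoplus_kV_k$, $V_k=\mathrm{soc}_{(i_k,\dots,i_1)}(\widehat I_{i_k})$ (where $\widehat I_i$ is the injective hull of the simple $S_i$ and $\mathrm{soc}_{(j_1,\dots,j_s)}(M)=M_s$, $M_0=0$, $M_p/M_{p-1}$ the sum of submodules of $M/M_{p-1}$ isomorphic to $S_{j_p}$). $[X,Y]=\dim\mathrm{Hom}_\Lambda(X,Y)$. A $\mathcal C_w$-maximal rigid module ($\mathrm{Ext}^1(T,T)=0$, and $X\in\mathcal C_w$, $\mathrm{Ext}^1(T\oplus X,X)=0$ imply $X\in\mathrm{add}T$) is $T=T_1\oplus\cdots\oplus T_r$ with pairwise non-isomorphic indecomposables, projective-injectives last; mutation replaces a non-projective $T_k$ by the unique indecomposable $T_k^*\not\cong T_k$ keeping maximal rigidity; reachable = obtained from $V_{\mathbf i}$ by mutations. $L_T=(\lambda_{ij})$, $\lambda_{ij}=[T_i,T_j]-[T_j,T_i]$. To a reachable $T$ is attached the cluster $(X_{T_1},\dots,X_{T_r})$ of its quantum seed, elements of a skew field satisfying $X_{T_i}X_{T_j}=q^{\lambda_{ij}}X_{T_j}X_{T_i}$.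 For $R=T_1^{a_1}\oplus\cdots\oplus T_r^{a_r}$ ($a_i\in\mathbb N$) put $X_R=q^{\frac12\sum_{i>j}a_ia_j\lambda_{ij}}X_{T_1}^{a_1}\cdots X_{T_r}^{a_r}$ and $Y_R=q^{-[R,R]/2}X_R$. *)

theory Defs
  imports Main
begin

text \<open>Abstract rendering of the data attached to a reachable C_w-maximal rigid module
  T = T_0 + ... + T_(r-1) (indices 0..r-1).
  hm i j stands for [T_i, T_j] = dim Hom(T_i, T_j).
  A module R in add(T) is given by its multiplicity vector a (R = sum of T_i^(a i)).
  The formal square root q^(1/2) is an element v, so q = v^2.\<close>

text \<open>[R,S] for R = (+) T_i^(a i), S = (+) T_j^(b j): Hom is biadditive.\<close>
definition hom_dim :: "nat \<Rightarrow> (nat \<Rightarrow> nat \<Rightarrow> nat) \<Rightarrow> (nat \<Rightarrow> nat) \<Rightarrow> (nat \<Rightarrow> nat) \<Rightarrow> int" where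
  "hom_dim r hm a b = (\<Sum>i<r. \<Sum>j<r. int (a i) * int (b j) * int (hm i j))"

definition lam :: "(nat \<Rightarrow> nat \<Rightarrow> nat) \<Rightarrow> nat \<Rightarrow> nat \<Rightarrow> int" where
  "lam hm i j = int (hm i j) - int (hm j i)"

definition XR :: "nat \<Rightarrow> (nat \<Rightarrow> nat \<Rightarrow> nat) \<Rightarrow> 'a::division_ring \<Rightarrow> (nat \<Rightarrow> 'a) \<Rightarrow> (nat \<Rightarrow> nat) \<Rightarrow> 'a" where
  "XR r hm v X a =
     v powi (\<Sum>i<r. \<Sum>j<i. int (a i) * int (a j) * lam hm i j)
     * prod_list (map (\<lambda>i. X i ^ a i) [0..<r])"

definition YR :: "nat \<Rightarrow> (nat \<Rightarrow> nat \<Rightarrow> nat) \<Rightarrow> 'a::division_ring \<Rightarrow> (nat \<Rightarrow> 'a) \<Rightarrow> (nat \<Rightarrow> nat) \<Rightarrow> 'a" where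
  "YR r hm v X a = v powi (- hom_dim r hm a a) * XR r hm v X a"

end

theory Submission
  imports Defs
begin

lemma central_inv:
  fixes v :: "'a::division_ring"
  assumes nz: "v \<noteq> 0" and c: "\<And>x. v * x = x * v"
  shows "inverse v * x = x * inverse v"
proof -
  have "inverse v * x = inverse v * (x * v) * inverse v" using nz by (simp add: mult.assoc)
  also have "\<dots> = inverse v * (v * x) * inverse v" using c by simp
  also have "\<dots> = x * inverse v" using nz by (simp flip: mult.assoc)
  finally show ?thesis .
qed

lemma central_pow:
  fixes v :: "'a::division_ring"
  assumes c: "\<And>x. v * x = x * v"
  shows "v ^ n * x = x * v ^ n"
proof (induction n)
  case 0 then show ?case by simp
next
  case (Suc n)
  have "v ^ Suc n * x = v * (v ^ n * x)" by (simp add: mult.assoc)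
  also have "\<dots> = v * (x * v ^ n)" using Suc by simp
  also have "\<dots> = x * v * v ^ n" using c by (simp flip: mult.assoc)
  also have "\<dots> = x * v ^ Suc n" by (simp add: mult.assoc power_commutes)
  finally show ?case .
qed

lemma central_powi:
  fixes v :: "'a::division_ring"
  assumes nz: "v \<noteq> 0" and c: "\<And>x. v * x = x * v"
  shows "v powi k * x = x * v powi k"
proof (cases "k \<ge> 0")
  case True then show ?thesis using central_pow[OF c] by (simp add: power_int_def)
next
  case False
  have ci: "\<And>x. inverse v * x = x * inverse v" using central_inv[OF nz c] .
  show ?thesis using False central_pow[of "inverse v", OF ci] by (simp add: power_int_def)
qed

lemma powi_add':
  fixes v :: "'a::division_ring"
  assumes nz: "v \<noteq> 0"
  shows "v powi m * v powi n = v powi (m + n)"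
  using nz by (simp add: power_int_add)

definition PP :: "(nat \<Rightarrow> 'a::division_ring) \<Rightarrow> (nat \<Rightarrow> nat) \<Rightarrow> nat \<Rightarrow> 'a" where
  "PP X a n = prod_list (map (\<lambda>i. X i ^ a i) [0..<n])"

lemma PP_Suc: "PP X a (Suc n) = PP X a n * X n ^ a n"
  by (simp add: PP_def)

context
  fixes r :: nat and hm :: "nat \<Rightarrow> nat \<Rightarrow> nat"
    and v :: "'a::division_ring" and X :: "nat \<Rightarrow> 'a"
  assumes v_nz: "v \<noteq> 0"
    and v_central: "\<And>x. v * x = x * v"
    and quasi_comm: "\<And>i j. i < r \<Longrightarrow> j < r \<Longrightarrow> X i * X j = (v\<^sup>2) powi (lam hm i j) * X j * X i"
begin

lemma cc: "v powi k * x = x * v powi k"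
  using central_powi[OF v_nz v_central] .

lemma cc2: "x * (v powi k * y) = v powi k * (x * y)"
  by (metis cc mult.assoc)

lemma cadd: "v powi m * (v powi n * x) = v powi (m + n) * x"
  using v_nz by (simp add: power_int_add mult.assoc)

lemma qc: "i < r \<Longrightarrow> j < r \<Longrightarrow> X i * X j = v powi (2 * lam hm i j) * X j * X i"
  using quasi_comm by (simp add: power_int_power)

lemma swapA:
  assumes "i < r" "j < r"
  shows "X i * X j ^ k = v powi (2 * int k * lam hm i j) * X j ^ k * X i"
proof (induction k)
  case 0 then show ?case by simp
next
  case (Suc k)
  have "X i * X j ^ Suc k = (X i * X j ^ k) * X j" by (metis power_Suc2 mult.assoc)
  also have "\<dots> = v powi (2 * int k * lam hm i j) * X j ^ k * (X i * X j)"
    using Suc by (simp add: mult.assoc)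
  also have "\<dots> = v powi (2 * int k * lam hm i j) * X j ^ k * (v powi (2 * lam hm i j) * X j * X i)"
    using qc[OF assms] by simp
  also have "\<dots> = v powi (2 * int k * lam hm i j) * (v powi (2 * lam hm i j) * (X j ^ k * X j * X i))"
    by (simp only: mult.assoc cc2[of "X j ^ k"])
  also have "\<dots> = v powi (2 * int k * lam hm i j + 2 * lam hm i j) * (X j ^ k * X j * X i)"
    by (rule cadd)
  also have "2 * int k * lam hm i j + 2 * lam hm i j = 2 * int (Suc k) * lam hm i j"
    by (simp add: algebra_simps)
  also have "X j ^ k * X j = X j ^ Suc k" by (rule power_Suc2[symmetric])
  finally show ?case by (simp only: mult.assoc)
qed

lemma swapB:
  assumes "i < r" "j < r"
  shows "X i ^ m * X j ^ k = v powi (2 * int m * int k * lam hm i j) * X j ^ k * X i ^ m"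
proof (induction m)
  case 0 then show ?case by simp
next
  case (Suc m)
  have "X i ^ Suc m * X j ^ k = X i ^ m * (X i * X j ^ k)" by (metis power_Suc2 mult.assoc)
  also have "\<dots> = X i ^ m * (v powi (2 * int k * lam hm i j) * X j ^ k * X i)"
    using swapA[OF assms] by simp
  also have "\<dots> = v powi (2 * int k * lam hm i j) * ((X i ^ m * X j ^ k) * X i)"
    by (simp only: mult.assoc cc2[of "X i ^ m"])
  also have "\<dots> = v powi (2 * int k * lam hm i j) * (v powi (2 * int m * int k * lam hm i j) * (X j ^ k * (X i ^ m * X i)))"
    using Suc by (simp add: mult.assoc)
  also have "\<dots> = v powi (2 * int k * lam hm i j + 2 * int m * int k * lam hm i j) * (X j ^ k * (X i ^ m * X i))"
    by (rule cadd)
  also have "2 * int k * lam hm i j + 2 * int m * int k * lam hm i j = 2 * int (Suc m) * int k * lam hm i j"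
    by (simp add: algebra_simps)
  also have "X i ^ m * X i = X i ^ Suc m" by (rule power_Suc2[symmetric])
  finally show ?case by (simp only: mult.assoc)
qed

lemma swapC:
  assumes "i < r" "n \<le> r"
  shows "X i ^ m * PP X b n = v powi (2 * (\<Sum>j<n. int m * int (b j) * lam hm i j)) * PP X b n * X i ^ m"
  using assms(2)
proof (induction n)
  case 0 then show ?case by (simp add: PP_def)
next
  case (Suc n)
  let ?e = "2 * (\<Sum>j<n. int m * int (b j) * lam hm i j)"
  have "X i ^ m * PP X b (Suc n) = (X i ^ m * PP X b n) * X n ^ b n" by (simp add: PP_Suc mult.assoc)
  also have "\<dots> = v powi ?e * (PP X b n * (X i ^ m * X n ^ b n))"
    using Suc by (simp add: mult.assoc)
  also have "\<dots> = v powi ?e * (PP X b n * (v powi (2 * int m * int (b n) * lam hm i n) * X n ^ b n * X i ^ m))"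
    using swapB[OF assms(1), of n m "b n"] Suc by simp
  also have "\<dots> = v powi ?e * (v powi (2 * int m * int (b n) * lam hm i n) * (PP X b n * X n ^ b n * X i ^ m))"
    by (simp only: mult.assoc cc2[of "PP X b n"])
  also have "\<dots> = v powi (?e + 2 * int m * int (b n) * lam hm i n) * (PP X b n * X n ^ b n * X i ^ m)"
    by (rule cadd)
  also have "?e + 2 * int m * int (b n) * lam hm i n = 2 * (\<Sum>j<Suc n. int m * int (b j) * lam hm i j)"
    by (simp add: algebra_simps)
  also have "PP X b n * X n ^ b n = PP X b (Suc n)" by (rule PP_Suc[symmetric])
  finally show ?case by (simp only: mult.assoc)
qed

lemma swapD:
  assumes "n \<le> r"
  shows "PP X a n * PP X b n = v powi (2 * (\<Sum>i<n. \<Sum>j<i. int (a i) * int (b j) * lam hm i j)) * PP X (\<lambda>i. a i + b i) n"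
  using assms
proof (induction n)
  case 0 then show ?case by (simp add: PP_def)
next
  case (Suc n)
  let ?E = "2 * (\<Sum>i<n. \<Sum>j<i. int (a i) * int (b j) * lam hm i j)"
  let ?e = "2 * (\<Sum>j<n. int (a n) * int (b j) * lam hm n j)"
  have "PP X a (Suc n) * PP X b (Suc n) = PP X a n * (X n ^ a n * PP X b n) * X n ^ b n"
    by (simp add: PP_Suc mult.assoc)
  also have "\<dots> = PP X a n * (v powi ?e * PP X b n * X n ^ a n) * X n ^ b n"
    using swapC[of n n "a n" b] Suc by simp
  also have "\<dots> = v powi ?e * ((PP X a n * PP X b n) * (X n ^ a n * X n ^ b n))"
    by (simp only: mult.assoc cc2[of "PP X a n"])
  also have "\<dots> = v powi ?e * (v powi ?E * (PP X (\<lambda>i. a i + b i) n * X n ^ (a n + b n)))"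
    using Suc by (simp add: mult.assoc power_add)
  also have "\<dots> = v powi (?e + ?E) * (PP X (\<lambda>i. a i + b i) n * X n ^ (a n + b n))"
    by (rule cadd)
  also have "?e + ?E = 2 * (\<Sum>i<Suc n. \<Sum>j<i. int (a i) * int (b j) * lam hm i j)"
    by (simp add: algebra_simps)
  also have "PP X (\<lambda>i. a i + b i) n * X n ^ (a n + b n) = PP X (\<lambda>i. a i + b i) (Suc n)"
    by (simp add: PP_Suc)
  finally show ?case .
qed

end


lemma key_sum:
  fixes a b :: "nat \<Rightarrow> int" and h :: "nat \<Rightarrow> nat \<Rightarrow> int"
  shows "(\<Sum>i<n. \<Sum>j<i. a i * b j * (h i j - h j i)) - (\<Sum>i<n. \<Sum>j<i. b i * a j * (h i j - h j i))
       = (\<Sum>i<n. \<Sum>j<n. a i * b j * h i j) - (\<Sum>i<n. \<Sum>j<n. b i * a j * h i j)"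
proof (induction n)
  case 0 then show ?case by simp
next
  case (Suc n)
  then show ?case
    by (simp add: sum.distrib sum_subtractf algebra_simps sum_distrib_left)
qed

lemma hom_dim_add:
  "hom_dim r hm (\<lambda>i. a i + b i) (\<lambda>i. a i + b i)
   = hom_dim r hm a a + hom_dim r hm a b + hom_dim r hm b a + hom_dim r hm b b"
  by (simp add: hom_dim_def sum.distrib algebra_simps)

lemma L_add:
  "(\<Sum>i<r. \<Sum>j<i. int (a i + b i) * int (a j + b j) * lam hm i j)
   = (\<Sum>i<r. \<Sum>j<i. int (a i) * int (a j) * lam hm i j)
   + (\<Sum>i<r. \<Sum>j<i. int (b i) * int (b j) * lam hm i j)
   + (\<Sum>i<r. \<Sum>j<i. int (a i) * int (b j) * lam hm i j)
   + (\<Sum>i<r. \<Sum>j<i. int (b i) * int (a j) * lam hm i j)"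
  by (simp add: sum.distrib algebra_simps)

lemma key2:
  "(\<Sum>i<r. \<Sum>j<i. int (a i) * int (b j) * lam hm i j) - (\<Sum>i<r. \<Sum>j<i. int (b i) * int (a j) * lam hm i j)
   = hom_dim r hm a b - hom_dim r hm b a"
  using key_sum[of "\<lambda>i. int (a i)" "\<lambda>i. int (b i)" "\<lambda>i j. int (hm i j)" r]
  by (simp add: hom_dim_def lam_def mult.assoc)

theorem lemma10p4:
  fixes r :: nat and hm :: "nat \<Rightarrow> nat \<Rightarrow> nat"
    and v :: "'a::division_ring" and X :: "nat \<Rightarrow> 'a"
    and a b :: "nat \<Rightarrow> nat"
  assumes v_nz: "v \<noteq> 0"
    and v_central: "\<And>x. v * x = x * v"
    and quasi_comm: "\<And>i j. i < r \<Longrightarrow> j < r \<Longrightarrow> X i * X j = (v\<^sup>2) powi (lam hm i j) * X j * X i"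
  shows "YR r hm v X a * YR r hm v X b
         = (v\<^sup>2) powi (hom_dim r hm a b) * YR r hm v X (\<lambda>i. a i + b i)"
proof -
  note cadd' = cadd[OF v_nz v_central quasi_comm]
  note cc2' = cc2[OF v_nz v_central quasi_comm]
  define L where "L c = (\<Sum>i<r. \<Sum>j<i. int (c i) * int (c j) * lam hm i j)" for c
  have Y: "YR r hm v X c = v powi (- hom_dim r hm c c + L c) * PP X c r" for c
    by (simp add: YR_def XR_def PP_def L_def cadd' mult.assoc)
  define E where "E = 2 * (\<Sum>i<r. \<Sum>j<i. int (a i) * int (b j) * lam hm i j)"
  have "YR r hm v X a * YR r hm v X b
      = v powi (- hom_dim r hm a a + L a) * (v powi (- hom_dim r hm b b + L b) * (PP X a r * PP X b r))"
    by (simp only: Y mult.assoc cc2'[where x="PP X a r"])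
  also have "\<dots> = v powi (- hom_dim r hm a a + L a) * (v powi (- hom_dim r hm b b + L b) * (v powi E * PP X (\<lambda>i. a i + b i) r))"
    using swapD[OF v_nz v_central quasi_comm, where n=r and a=a and b=b] by (simp add: E_def)
  also have "\<dots> = v powi ((- hom_dim r hm a a + L a) + ((- hom_dim r hm b b + L b) + E)) * PP X (\<lambda>i. a i + b i) r"
    by (simp only: cadd')
  also have "(- hom_dim r hm a a + L a) + ((- hom_dim r hm b b + L b) + E)
      = 2 * hom_dim r hm a b + (- hom_dim r hm (\<lambda>i. a i + b i) (\<lambda>i. a i + b i) + L (\<lambda>i. a i + b i))"
    using hom_dim_add[where r=r and hm=hm and a=a and b=b] L_add[where r=r and hm=hm and a=a and b=b] key2[where r=r and hm=hm and a=a and b=b]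
    unfolding L_def E_def by linarith
  also have "v powi (2 * hom_dim r hm a b + (- hom_dim r hm (\<lambda>i. a i + b i) (\<lambda>i. a i + b i) + L (\<lambda>i. a i + b i))) * PP X (\<lambda>i. a i + b i) r
     = (v\<^sup>2) powi (hom_dim r hm a b) * YR r hm v X (\<lambda>i. a i + b i)"
    by (simp only: Y cadd' power_int_power mult.assoc) simp
  finally show ?thesis .
qed

end
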